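(* Let $X$ be a metric space with bounded geometry. Then the normalisers of $\ell^\infty(X)$ in $C^*_u(X)$ and in $C^*_{uq}(X)$ coincide. More precisely, for $T\in\mathfrak B(\ell^2(X))$ the following are equivalent: (1) $T$ belongs to the normaliser of $\ell^\infty(X)$ in $C^*_u(X)$; (2) $T$ belongs to the normaliser of $\ell^\infty(X)$ in $C^*_{uq}(X)$; (3) $T=fV^\theta$ for some $f\in\ell^\infty(X)$ and some bijection $\theta:D\to R$ between subsets $D,R\subseteq X$ such that for every $\varepsilon>0$ there exists $K>0$ with $|f(x)|<\varepsilon$ for all $x\in D$ with $d(x,\theta(x))>K$.
   Context: Bounded geometry: $\sup_x|B(x,r)|<\infty$ for all $r>0$. $C^*_u(X)$ is the norm closure of finite propagation operators on $\ell^2(X)$; $C^*_{uq}(X)$ is the $C^*$-algebra of quasi-local operators ($T$ such that for each $\varepsilon>0$ there is $r>0$ with $\|\chi_AT\chi_B\|\leq\varepsilon$ whenever $d(A,B)\geq r$). $\ell^\infty(X)$ acts by multiplication. For a bijection $\theta:D\to R$, $V^\theta$ is the operator with matrix entries $V^\theta_{x,y}=1$ if $x\in D$ and $y=\theta(x)$, and $0$ otherwise. The normaliser of $\mathcal B$ in $\mathcal A$ is $\{a\in\mathcal A: a\mathcal Ba^*\cup a^*\mathcal Ba\subseteq\mathcal B\}$. *)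

theory Defs
  imports "HOL-Analysis.Analysis"
begin

text \<open>The metric space X is the universe of a type 'a :: metric_space.\<close>

definition bounded_geometry :: "'a::metric_space itself \<Rightarrow> bool" where
  "bounded_geometry _ \<longleftrightarrow>
     (\<forall>r>0. \<exists>N::nat. \<forall>x::'a. finite (cball x r) \<and> card (cball x r) \<le> N)"

definition ell2 :: "('a \<Rightarrow> complex) set" where
  "ell2 = {h. (\<lambda>x. (cmod (h x))\<^sup>2) summable_on UNIV}"

definition ell2_inner :: "('a \<Rightarrow> complex) \<Rightarrow> ('a \<Rightarrow> complex) \<Rightarrow> complex" where
  "ell2_inner g h = infsum (\<lambda>x. cnj (g x) * h x) UNIV"

definition ell2_norm :: "('a \<Rightarrow> complex) \<Rightarrow> real" where
  "ell2_norm h = sqrt (infsum (\<lambda>x. (cmod (h x))\<^sup>2) UNIV)"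

text \<open>Bounded operators on l2(X): complex-linear maps of l2(X) into itself with a
  norm bound; by convention they vanish outside l2(X), so equality of operators is
  equality of functions.\<close>

definition bounded_op :: "(('a \<Rightarrow> complex) \<Rightarrow> ('a \<Rightarrow> complex)) \<Rightarrow> bool" where
  "bounded_op T \<longleftrightarrow>
     (\<forall>h\<in>ell2. T h \<in> ell2) \<and>
     (\<forall>h. h \<notin> ell2 \<longrightarrow> T h = (\<lambda>x. 0)) \<and>
     (\<forall>g\<in>ell2. \<forall>h\<in>ell2. T (\<lambda>x. g x + h x) = (\<lambda>x. T g x + T h x)) \<and>
     (\<forall>c. \<forall>h\<in>ell2. T (\<lambda>x. c * h x) = (\<lambda>x. c * T h x)) \<and>
     (\<exists>C. \<forall>h\<in>ell2. ell2_norm (T h) \<le> C * ell2_norm h)"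

definition op_norm :: "(('a \<Rightarrow> complex) \<Rightarrow> ('a \<Rightarrow> complex)) \<Rightarrow> real" where
  "op_norm T = Sup {ell2_norm (T h) | h. h \<in> ell2 \<and> ell2_norm h \<le> 1}"

definition adj :: "(('a \<Rightarrow> complex) \<Rightarrow> ('a \<Rightarrow> complex)) \<Rightarrow> (('a \<Rightarrow> complex) \<Rightarrow> ('a \<Rightarrow> complex))" where
  "adj T = (SOME S. bounded_op S \<and>
              (\<forall>g\<in>ell2. \<forall>h\<in>ell2. ell2_inner (T g) h = ell2_inner g (S h)))"

definition mult_op :: "('a \<Rightarrow> complex) \<Rightarrow> (('a \<Rightarrow> complex) \<Rightarrow> ('a \<Rightarrow> complex))" where
  "mult_op f = (\<lambda>h. if h \<in> ell2 then (\<lambda>x. f x * h x) else (\<lambda>x. 0))"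

definition linf_ops :: "(('a \<Rightarrow> complex) \<Rightarrow> ('a \<Rightarrow> complex)) set" where
  "linf_ops = {mult_op f | f. bounded (range f)}"

definition chi :: "'a set \<Rightarrow> (('a \<Rightarrow> complex) \<Rightarrow> ('a \<Rightarrow> complex))" where
  "chi A = mult_op (indicator A)"

definition delta :: "'a \<Rightarrow> 'a \<Rightarrow> complex" where
  "delta y = (\<lambda>z. if z = y then 1 else 0)"

definition entry :: "(('a \<Rightarrow> complex) \<Rightarrow> ('a \<Rightarrow> complex)) \<Rightarrow> 'a \<Rightarrow> 'a \<Rightarrow> complex" where
  "entry T x y = T (delta y) x"

definition finite_propagation :: "(('a::metric_space \<Rightarrow> complex) \<Rightarrow> ('a \<Rightarrow> complex)) \<Rightarrow> bool" where
  "finite_propagation T \<longleftrightarrow> (\<exists>r. \<forall>x y. dist x y > r \<longrightarrow> entry T x y = 0)"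

definition uniform_roe :: "(('a::metric_space \<Rightarrow> complex) \<Rightarrow> ('a \<Rightarrow> complex)) set" where
  "uniform_roe = {T. bounded_op T \<and>
     (\<forall>\<epsilon>>0. \<exists>S. bounded_op S \<and> finite_propagation S \<and> op_norm (\<lambda>h x. T h x - S h x) \<le> \<epsilon>)}"

definition quasi_local :: "(('a::metric_space \<Rightarrow> complex) \<Rightarrow> ('a \<Rightarrow> complex)) set" where
  "quasi_local = {T. bounded_op T \<and>
     (\<forall>\<epsilon>>0. \<exists>r>0. \<forall>A B. setdist A B \<ge> r \<longrightarrow> op_norm (chi A \<circ> T \<circ> chi B) \<le> \<epsilon>)}"

definition normaliser ::
  "(('a \<Rightarrow> complex) \<Rightarrow> ('a \<Rightarrow> complex)) set \<Rightarrow> (('a \<Rightarrow> complex) \<Rightarrow> ('a \<Rightarrow> complex)) set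
     \<Rightarrow> (('a \<Rightarrow> complex) \<Rightarrow> ('a \<Rightarrow> complex)) set" where
  "normaliser \<B> \<A> = {a \<in> \<A>. \<forall>b\<in>\<B>. a \<circ> b \<circ> adj a \<in> \<B> \<and> adj a \<circ> b \<circ> a \<in> \<B>}"

definition partial_translation :: "('a \<Rightarrow> 'a) \<Rightarrow> 'a set \<Rightarrow> (('a \<Rightarrow> complex) \<Rightarrow> ('a \<Rightarrow> complex))" where
  "partial_translation \<theta> D = (\<lambda>h. if h \<in> ell2 then (\<lambda>x. if x \<in> D then h (\<theta> x) else 0) else (\<lambda>x. 0))"

end

theory Submission
  imports Defs
begin


abbreviation nsq :: "('a \<Rightarrow> complex) \<Rightarrow> 'a \<Rightarrow> real" where
  "nsq h \<equiv> (\<lambda>x. (cmod (h x))\<^sup>2)"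

lemma ell2_zero[simp]: "(\<lambda>x. 0) \<in> ell2"
  by (simp add: ell2_def)

lemma ell2_dom:
  assumes "h \<in> ell2" "\<And>x. cmod (k x) \<le> cmod (h x)"
  shows "k \<in> ell2"
proof -
  have "nsq h summable_on UNIV" using assms(1) by (simp add: ell2_def)
  then have "nsq k summable_on UNIV"
    by (rule summable_on_comparison_test) (auto intro: power_mono assms(2))
  then show ?thesis by (simp add: ell2_def)
qed

lemma ell2_cmult:
  assumes "h \<in> ell2" shows "(\<lambda>x. c * h x) \<in> ell2"
proof -
  have "nsq h summable_on UNIV" using assms(1) by (simp add: ell2_def)
  then have "(\<lambda>x. (cmod c)\<^sup>2 * nsq h x) summable_on UNIV"
    by (rule summable_on_cmult_right)
  then show ?thesis by (simp add: ell2_def norm_mult power_mult_distrib)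
qed

lemma sq_add_le: "(cmod (a + b))\<^sup>2 \<le> 2 * (cmod a)\<^sup>2 + 2 * (cmod b)\<^sup>2"
proof -
  have "cmod (a+b) \<le> cmod a + cmod b" by (rule norm_triangle_ineq)
  then have "(cmod (a+b))\<^sup>2 \<le> (cmod a + cmod b)\<^sup>2"
    by (simp add: power_mono)
  also have "\<dots> \<le> 2 * (cmod a)\<^sup>2 + 2 * (cmod b)\<^sup>2"
    by (smt (verit) power2_sum sum_squares_bound)
  finally show ?thesis .
qed

lemma ell2_add:
  assumes "g \<in> ell2" "h \<in> ell2" shows "(\<lambda>x. g x + h x) \<in> ell2"
proof -
  have "nsq h summable_on UNIV" "nsq g summable_on UNIV" using assms by (simp_all add: ell2_def)
  then have "(\<lambda>x. 2 * nsq g x + 2 * nsq h x) summable_on UNIV"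
    by (intro summable_on_add summable_on_cmult_right)
  then have "nsq (\<lambda>x. g x + h x) summable_on UNIV"
    by (rule summable_on_comparison_test) (auto intro: sq_add_le)
  then show ?thesis by (simp add: ell2_def)
qed

lemma ell2_diff:
  assumes "g \<in> ell2" "h \<in> ell2" shows "(\<lambda>x. g x - h x) \<in> ell2"
  using ell2_add[OF assms(1) ell2_cmult[OF assms(2), of "-1"]] by simp

lemma ell2_bmult:
  assumes "h \<in> ell2" "\<And>x. cmod (f x) \<le> M" shows "(\<lambda>x. f x * h x) \<in> ell2"
proof (rule ell2_dom[OF ell2_cmult[OF assms(1), of M]])
  fix x
  have "cmod (f x) * cmod (h x) \<le> M * cmod (h x)"
    by (simp add: assms(2) mult_right_mono)
  also have "\<dots> \<le> cmod (complex_of_real M) * cmod (h x)"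
    by (simp add: mult_right_mono)
  finally show "cmod (f x * h x) \<le> cmod (complex_of_real M * h x)"
    by (simp add: norm_mult)
qed

lemma ell2_finite_support:
  assumes "finite {x. h x \<noteq> 0}" shows "h \<in> ell2"
proof -
  have "(nsq h has_sum (\<Sum>x\<in>{x. h x \<noteq> 0}. nsq h x)) UNIV"
    by (rule has_sum_finite_neutralI) (use assms in auto)
  then show ?thesis by (auto simp: ell2_def summable_on_def)
qed

lemma ell2_delta[simp]: "delta y \<in> ell2"
  by (rule ell2_finite_support) (simp add: delta_def)

lemma ell2_summable: "h \<in> ell2 \<Longrightarrow> nsq h summable_on UNIV"
  by (simp add: ell2_def)

lemma ell2_norm_nonneg: "ell2_norm h \<ge> 0"
  unfolding ell2_norm_def by (simp add: infsum_nonneg)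

lemma ell2_norm_sq: "(ell2_norm h)\<^sup>2 = infsum (nsq h) UNIV"
  unfolding ell2_norm_def by (simp add: infsum_nonneg)

lemma ell2_point_le:
  assumes "h \<in> ell2" shows "cmod (h x) \<le> ell2_norm h"
proof -
  have "infsum (nsq h) {x} \<le> infsum (nsq h) UNIV"
    by (rule infsum_mono2) (use assms in \<open>auto simp: ell2_def\<close>)
  then have "(cmod (h x))\<^sup>2 \<le> (ell2_norm h)\<^sup>2" by (simp add: ell2_norm_sq)
  then show ?thesis by (rule power2_le_imp_le) (simp add: ell2_norm_nonneg)
qed

lemma ell2_norm_zero:
  assumes "h \<in> ell2" "ell2_norm h = 0" shows "h = (\<lambda>x. 0)"
  using ell2_point_le[OF assms(1)] assms(2) by fastforce

lemma ell2_norm_mono: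
  assumes "h \<in> ell2" "\<And>x. cmod (k x) \<le> cmod (h x)"
  shows "ell2_norm k \<le> ell2_norm h"
proof -
  have "k \<in> ell2" using ell2_dom assms by blast
  then have "infsum (nsq k) UNIV \<le> infsum (nsq h) UNIV"
    by (intro infsum_mono) (use assms in \<open>auto simp: ell2_def intro: power_mono\<close>)
  then show ?thesis unfolding ell2_norm_def by simp
qed

lemma ell2_norm_cmult: "ell2_norm (\<lambda>x. c * h x) = cmod c * ell2_norm h"
proof -
  have "infsum (nsq (\<lambda>x. c * h x)) UNIV = (cmod c)\<^sup>2 * infsum (nsq h) UNIV"
    by (simp add: norm_mult power_mult_distrib infsum_cmult_right')
  then show ?thesis unfolding ell2_norm_def by (simp add: real_sqrt_mult)
qed

lemma ell2_norm_delta[simp]: "ell2_norm (delta y) = 1"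
proof -
  have "infsum (nsq (delta y)) UNIV = (\<Sum>x\<in>{y}. nsq (delta y) x)"
    by (rule infsumI, rule has_sum_finite_neutralI[where B="{y}"]) (auto simp: delta_def)
  then show ?thesis unfolding ell2_norm_def by (simp add: delta_def)
qed



lemma inner_abs_summable:
  assumes "g \<in> ell2" "h \<in> ell2"
  shows "(\<lambda>x. norm (cnj (g x) * h x)) summable_on UNIV"
proof -
  have "(\<lambda>x. nsq g x + nsq h x) summable_on UNIV"
    using assms by (intro summable_on_add) (simp_all add: ell2_def)
  then show ?thesis
  proof (rule summable_on_comparison_test)
    fix x
    have "2 * (cmod (g x) * cmod (h x)) \<le> nsq g x + nsq h x"
      using sum_squares_bound[of "cmod (g x)" "cmod (h x)"] by (simp only: mult.assoc)
    moreover have "0 \<le> cmod (g x) * cmod (h x)" by simp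
    ultimately have "cmod (g x) * cmod (h x) \<le> nsq g x + nsq h x" by linarith
    then show "norm (cnj (g x) * h x) \<le> nsq g x + nsq h x"
      by (simp add: norm_mult)
  qed simp
qed

lemma inner_summable:
  assumes "g \<in> ell2" "h \<in> ell2"
  shows "(\<lambda>x. cnj (g x) * h x) summable_on UNIV"
  using abs_summable_summable[OF inner_abs_summable[OF assms]] .

lemma amgm_aux:
  fixes a b A B :: real
  assumes "A > 0" "B > 0"
  shows "a * b \<le> B / (2 * A) * a\<^sup>2 + A / (2 * B) * b\<^sup>2"
proof -
  have "0 \<le> (B * a - A * b)\<^sup>2" by simp
  then have "2 * A * B * (a * b) \<le> B\<^sup>2 * a\<^sup>2 + A\<^sup>2 * b\<^sup>2"
    by (simp add: power2_eq_square algebra_simps)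
  then have "a * b \<le> (B\<^sup>2 * a\<^sup>2 + A\<^sup>2 * b\<^sup>2) / (2 * A * B)"
    using assms by (simp add: field_simps)
  also have "\<dots> = B / (2 * A) * a\<^sup>2 + A / (2 * B) * b\<^sup>2"
    using assms by (simp add: field_simps power2_eq_square)
  finally show ?thesis .
qed

lemma cauchy_schwarz_real:
  assumes "g \<in> ell2" "h \<in> ell2"
  shows "infsum (\<lambda>x. cmod (g x) * cmod (h x)) UNIV \<le> ell2_norm g * ell2_norm h"
proof (cases "ell2_norm g = 0 \<or> ell2_norm h = 0")
  case True
  then have "g = (\<lambda>x. 0) \<or> h = (\<lambda>x. 0)" using ell2_norm_zero assms by blast
  then show ?thesis using ell2_norm_nonneg[of g] ell2_norm_nonneg[of h] by auto
next
  case False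
  define A where "A = ell2_norm g"
  define B where "B = ell2_norm h"
  have A: "A > 0" and B: "B > 0" using False ell2_norm_nonneg[of g] ell2_norm_nonneg[of h]
    unfolding A_def B_def by linarith+
  have sg: "nsq g summable_on UNIV" and sh: "nsq h summable_on UNIV"
    using assms by (simp_all add: ell2_def)
  have s1: "(\<lambda>x. cmod (g x) * cmod (h x)) summable_on UNIV"
    using inner_abs_summable[OF assms] by (simp add: norm_mult)
  have s2: "(\<lambda>x. B / (2 * A) * nsq g x + A / (2 * B) * nsq h x) summable_on UNIV"
    by (intro summable_on_add summable_on_cmult_right sg sh)
  have "infsum (\<lambda>x. cmod (g x) * cmod (h x)) UNIV
      \<le> infsum (\<lambda>x. B / (2 * A) * nsq g x + A / (2 * B) * nsq h x) UNIV"
    by (rule infsum_mono[OF s1 s2]) (rule amgm_aux[OF A B])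
  also have "\<dots> = B / (2 * A) * infsum (nsq g) UNIV + A / (2 * B) * infsum (nsq h) UNIV"
    by (subst infsum_add) (auto intro!: summable_on_cmult_right sg sh simp only: infsum_cmult_right')
  also have "\<dots> = B / (2 * A) * A\<^sup>2 + A / (2 * B) * B\<^sup>2"
    unfolding A_def B_def ell2_norm_sq ..
  also have "\<dots> = A * B" using A B by (simp add: field_simps power2_eq_square)
  finally show ?thesis unfolding A_def B_def .
qed

lemma cauchy_schwarz:
  assumes "g \<in> ell2" "h \<in> ell2"
  shows "cmod (ell2_inner g h) \<le> ell2_norm g * ell2_norm h"
proof -
  have "cmod (ell2_inner g h) \<le> infsum (\<lambda>x. norm (cnj (g x) * h x)) UNIV"
    unfolding ell2_inner_def by (rule norm_infsum_bound[OF inner_abs_summable[OF assms]])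
  also have "\<dots> = infsum (\<lambda>x. cmod (g x) * cmod (h x)) UNIV" by (simp add: norm_mult)
  also have "\<dots> \<le> ell2_norm g * ell2_norm h" by (rule cauchy_schwarz_real[OF assms])
  finally show ?thesis .
qed

lemma inner_add_right:
  assumes "g \<in> ell2" "h1 \<in> ell2" "h2 \<in> ell2"
  shows "ell2_inner g (\<lambda>x. h1 x + h2 x) = ell2_inner g h1 + ell2_inner g h2"
  unfolding ell2_inner_def using inner_summable[OF assms(1,2)] inner_summable[OF assms(1,3)]
  by (simp add: distrib_left infsum_add)

lemma inner_add_left:
  assumes "g1 \<in> ell2" "g2 \<in> ell2" "h \<in> ell2"
  shows "ell2_inner (\<lambda>x. g1 x + g2 x) h = ell2_inner g1 h + ell2_inner g2 h"
  unfolding ell2_inner_def using inner_summable[OF assms(1,3)] inner_summable[OF assms(2,3)]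
  by (simp add: distrib_right infsum_add)

lemma inner_diff_left:
  assumes "g1 \<in> ell2" "g2 \<in> ell2" "h \<in> ell2"
  shows "ell2_inner (\<lambda>x. g1 x - g2 x) h = ell2_inner g1 h - ell2_inner g2 h"
proof -
  have "ell2_inner g1 h = ell2_inner (\<lambda>x. (g1 x - g2 x) + g2 x) h" by simp
  also have "\<dots> = ell2_inner (\<lambda>x. g1 x - g2 x) h + ell2_inner g2 h"
    by (rule inner_add_left) (use assms ell2_diff in auto)
  finally show ?thesis by simp
qed

lemma inner_diff_right:
  assumes "g \<in> ell2" "h1 \<in> ell2" "h2 \<in> ell2"
  shows "ell2_inner g (\<lambda>x. h1 x - h2 x) = ell2_inner g h1 - ell2_inner g h2"
proof -
  have "ell2_inner g h1 = ell2_inner g (\<lambda>x. (h1 x - h2 x) + h2 x)" by simp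
  also have "\<dots> = ell2_inner g (\<lambda>x. h1 x - h2 x) + ell2_inner g h2"
    by (rule inner_add_right) (use assms ell2_diff in auto)
  finally show ?thesis by simp
qed

lemma inner_cmult_right:
  "ell2_inner g (\<lambda>x. c * h x) = c * ell2_inner g h"
  unfolding ell2_inner_def
  by (simp add: mult.left_commute infsum_cmult_right')

lemma inner_cmult_left:
  "ell2_inner (\<lambda>x. c * g x) h = cnj c * ell2_inner g h"
  unfolding ell2_inner_def
  by (simp add: mult.assoc infsum_cmult_right')

lemma inner_delta_left[simp]: "ell2_inner (delta y) k = k y"
  unfolding ell2_inner_def
  by (rule infsumI, rule has_sum_finite_neutralI[where B="{y}"]) (auto simp: delta_def)

lemma inner_delta_right[simp]: "ell2_inner k (delta y) = cnj (k y)"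
  unfolding ell2_inner_def
  by (rule infsumI, rule has_sum_finite_neutralI[where B="{y}"]) (auto simp: delta_def)

lemma inner_cnj_sym: "ell2_inner g h = cnj (ell2_inner h g)"
  unfolding ell2_inner_def infsum_cnj[symmetric] by (simp add: mult.commute)

lemma inner_self: assumes "h \<in> ell2" shows "ell2_inner h h = complex_of_real ((ell2_norm h)\<^sup>2)"
proof -
  have "ell2_inner h h = infsum (\<lambda>x. complex_of_real (nsq h x)) UNIV"
    unfolding ell2_inner_def by (rule infsum_cong) (metis complex_norm_square mult.commute of_real_power)
  also have "\<dots> = complex_of_real (infsum (nsq h) UNIV)"
    by (rule infsumI[OF has_sum_of_real[OF has_sum_infsum[OF ell2_summable[OF assms]]]])
  finally show ?thesis by (simp add: ell2_norm_sq)
qed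



lemma bop_ell2: "bounded_op T \<Longrightarrow> h \<in> ell2 \<Longrightarrow> T h \<in> ell2"
  unfolding bounded_op_def by blast

lemma bop_out: "bounded_op T \<Longrightarrow> h \<notin> ell2 \<Longrightarrow> T h = (\<lambda>x. 0)"
  unfolding bounded_op_def by blast

lemma bop_add: "bounded_op T \<Longrightarrow> g \<in> ell2 \<Longrightarrow> h \<in> ell2 \<Longrightarrow> T (\<lambda>x. g x + h x) = (\<lambda>x. T g x + T h x)"
  unfolding bounded_op_def by blast

lemma bop_cmult: "bounded_op T \<Longrightarrow> h \<in> ell2 \<Longrightarrow> T (\<lambda>x. c * h x) = (\<lambda>x. c * T h x)"
  unfolding bounded_op_def by blast

lemma bop_zero: "bounded_op T \<Longrightarrow> T (\<lambda>x. 0) = (\<lambda>x. 0)"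
  using bop_cmult[of T "\<lambda>x. 0" 0] by simp

lemma bop_diff: "bounded_op T \<Longrightarrow> g \<in> ell2 \<Longrightarrow> h \<in> ell2 \<Longrightarrow> T (\<lambda>x. g x - h x) = (\<lambda>x. T g x - T h x)"
proof -
  assume a: "bounded_op T" "g \<in> ell2" "h \<in> ell2"
  have "T (\<lambda>x. g x - h x) = T (\<lambda>x. g x + (-1) * h x)" by simp
  also have "\<dots> = (\<lambda>x. T g x + T (\<lambda>x. (-1) * h x) x)"
    by (rule bop_add[OF a(1,2) ell2_cmult[OF a(3)]])
  also have "\<dots> = (\<lambda>x. T g x - T h x)" using bop_cmult[OF a(1,3), of "-1"] by simp
  finally show ?thesis .
qed

lemma bop_bound:
  fixes T :: "('a \<Rightarrow> complex) \<Rightarrow> ('a \<Rightarrow> complex)"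
  assumes "bounded_op T"
  obtains C where "C \<ge> 0" "\<And>h::'a \<Rightarrow> complex. h \<in> ell2 \<Longrightarrow> ell2_norm (T h) \<le> C * ell2_norm h"
proof -
  obtain C where C: "\<forall>h\<in>ell2. ell2_norm (T h) \<le> C * ell2_norm (h::'a\<Rightarrow>complex)"
    using assms unfolding bounded_op_def by blast
  show ?thesis
  proof (rule that[of "max C 0"])
    fix h :: "'a \<Rightarrow> complex" assume "h \<in> ell2"
    then have "ell2_norm (T h) \<le> C * ell2_norm h" using C by blast
    also have "\<dots> \<le> max C 0 * ell2_norm h"
      by (rule mult_right_mono) (auto simp: ell2_norm_nonneg)
    finally show "ell2_norm (T h) \<le> max C 0 * ell2_norm h" .
  qed simp
qed

lemma ell2_sum:
  assumes "finite F" "\<And>y. y \<in> F \<Longrightarrow> k y \<in> ell2"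
  shows "(\<lambda>x. \<Sum>y\<in>F. a y * k y x) \<in> ell2"
  using assms
proof (induction F rule: finite_induct)
  case empty then show ?case by simp
next
  case (insert z F)
  have "(\<lambda>x. a z * k z x + (\<Sum>y\<in>F. a y * k y x)) \<in> ell2"
    by (rule ell2_add) (use insert ell2_cmult in auto)
  then show ?case using insert by simp
qed

lemma bop_sum:
  assumes "bounded_op T" "finite F" "\<And>y. y \<in> F \<Longrightarrow> k y \<in> ell2"
  shows "T (\<lambda>x. \<Sum>y\<in>F. a y * k y x) = (\<lambda>x. \<Sum>y\<in>F. a y * T (k y) x)"
  using assms(2,3)
proof (induction F rule: finite_induct)
  case empty then show ?case using bop_zero[OF assms(1)] by simp
next
  case (insert z F)
  have "T (\<lambda>x. a z * k z x + (\<Sum>y\<in>F. a y * k y x))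
        = (\<lambda>x. T (\<lambda>x. a z * k z x) x + T (\<lambda>x. \<Sum>y\<in>F. a y * k y x) x)"
  proof (rule bop_add[OF assms(1)])
    show "(\<lambda>x. a z * k z x) \<in> ell2" using insert ell2_cmult by auto
    show "(\<lambda>x. \<Sum>y\<in>F. a y * k y x) \<in> ell2" by (rule ell2_sum) (use insert in auto)
  qed
  also have "\<dots> = (\<lambda>x. a z * T (k z) x + (\<Sum>y\<in>F. a y * T (k y) x))"
    using insert bop_cmult[OF assms(1)] by auto
  finally show ?case using insert by simp
qed

lemma inner_sum_left:
  assumes "finite F" "\<And>y. y \<in> F \<Longrightarrow> k y \<in> ell2" "h \<in> ell2"
  shows "ell2_inner (\<lambda>x. \<Sum>y\<in>F. a y * k y x) h = (\<Sum>y\<in>F. cnj (a y) * ell2_inner (k y) h)"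
  using assms(1,2)
proof (induction F rule: finite_induct)
  case empty then show ?case by (simp add: ell2_inner_def)
next
  case (insert z F)
  have "ell2_inner (\<lambda>x. a z * k z x + (\<Sum>y\<in>F. a y * k y x)) h
      = ell2_inner (\<lambda>x. a z * k z x) h + ell2_inner (\<lambda>x. \<Sum>y\<in>F. a y * k y x) h"
  proof (rule inner_add_left)
    show "(\<lambda>x. a z * k z x) \<in> ell2" using insert ell2_cmult by auto
    show "(\<lambda>x. \<Sum>y\<in>F. a y * k y x) \<in> ell2" by (rule ell2_sum) (use insert in auto)
  qed (rule assms(3))
  then show ?case using insert by (simp add: inner_cmult_left)
qed

lemma delta_sum: assumes "finite F" shows "(\<lambda>z. \<Sum>y\<in>F. a y * delta y z) = (\<lambda>z. if z \<in> F then a z else 0)"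
proof -
  have "\<And>z y. a y * delta y z = (if z = y then a y else 0)" by (simp add: delta_def)
  then show ?thesis using \<open>finite F\<close> by (simp add: sum.delta')
qed



lemma cnj_mult_self: "cnj z * z = complex_of_real ((cmod z)\<^sup>2)"
  by (metis complex_norm_square mult.commute of_real_power)

lemma adj_claim1:
  fixes T :: "('a \<Rightarrow> complex) \<Rightarrow> ('a \<Rightarrow> complex)"
  assumes T: "bounded_op T" and C0: "C \<ge> 0"
    and CT: "\<And>h. h\<in>ell2 \<Longrightarrow> ell2_norm (T h) \<le> C * ell2_norm h"
    and h: "h \<in> ell2" and F: "finite F"
  shows "(\<Sum>y\<in>F. nsq (\<lambda>y. ell2_inner (T (delta y)) h) y) \<le> (C * ell2_norm h)\<^sup>2"
proof -
  define c where "c y = ell2_inner (T (delta y)) h" for y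
  define g where "g = (\<lambda>z. if z \<in> F then c z else 0)"
  define s where "s = (\<Sum>y\<in>F. (cmod (c y))\<^sup>2)"
  have s0: "s \<ge> 0" unfolding s_def by (simp add: sum_nonneg)
  have g_eq: "g = (\<lambda>z. \<Sum>y\<in>F. c y * delta y z)" using delta_sum[OF F] g_def by simp
  have gl: "g \<in> ell2" unfolding g_eq by (rule ell2_sum[OF F]) simp
  have Tg: "T g = (\<lambda>x. \<Sum>y\<in>F. c y * T (delta y) x)" unfolding g_eq by (rule bop_sum[OF T F]) simp
  have "ell2_inner (T g) h = (\<Sum>y\<in>F. cnj (c y) * ell2_inner (T (delta y)) h)"
    unfolding Tg by (rule inner_sum_left[OF F _ h]) (simp add: bop_ell2[OF T])
  also have "\<dots> = (\<Sum>y\<in>F. complex_of_real ((cmod (c y))\<^sup>2))"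
    by (simp add: c_def[symmetric] cnj_mult_self)
  also have "\<dots> = complex_of_real s" unfolding s_def by simp
  finally have inn: "ell2_inner (T g) h = complex_of_real s" .
  have "infsum (nsq g) UNIV = (\<Sum>y\<in>F. nsq g y)"
    by (rule infsumI, rule has_sum_finite_neutralI[where B=F]) (auto simp: F g_def)
  also have "\<dots> = s" unfolding s_def by (rule sum.cong) (auto simp: g_def)
  finally have gn: "ell2_norm g = sqrt s" unfolding ell2_norm_def by simp
  have "s = cmod (ell2_inner (T g) h)" using inn s0 by simp
  also have "\<dots> \<le> ell2_norm (T g) * ell2_norm h" by (rule cauchy_schwarz[OF bop_ell2[OF T gl] h])
  also have "\<dots> \<le> (C * ell2_norm g) * ell2_norm h"
    by (rule mult_right_mono[OF CT[OF gl] ell2_norm_nonneg])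
  finally have ineq: "s \<le> C * ell2_norm h * sqrt s" unfolding gn by (simp add: algebra_simps)
  show ?thesis
  proof (cases "s = 0")
    case True
    then show ?thesis unfolding s_def c_def by simp
  next
    case False
    then have sp: "sqrt s > 0" using s0 by simp
    have e: "sqrt s * sqrt s = s" using s0 by simp
    have "sqrt s * sqrt s \<le> C * ell2_norm h * sqrt s" using ineq by (subst e)
    then have "sqrt s \<le> C * ell2_norm h" using mult_right_le_imp_le sp by blast
    then have "(sqrt s)\<^sup>2 \<le> (C * ell2_norm h)\<^sup>2" using sp by (intro power_mono) auto
    then show ?thesis using s0 unfolding s_def c_def by simp
  qed
qed

lemma adj_exists:
  fixes T :: "('a \<Rightarrow> complex) \<Rightarrow> ('a \<Rightarrow> complex)"
  assumes T: "bounded_op T"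
  shows "\<exists>S. bounded_op S \<and> (\<forall>g\<in>ell2. \<forall>h\<in>ell2. ell2_inner (T g) h = ell2_inner g (S h))"
proof -
  obtain C where C0: "C \<ge> 0" and CT: "\<And>h. h\<in>ell2 \<Longrightarrow> ell2_norm (T h) \<le> C * ell2_norm h"
    using bop_bound[OF T] by metis
  define c where "c h = (\<lambda>y. ell2_inner (T (delta y)) h)" for h
  define S where "S h = (if h \<in> ell2 then c h else (\<lambda>x. 0))" for h
  have csum: "nsq (c h) summable_on UNIV" and cinf: "infsum (nsq (c h)) UNIV \<le> (C * ell2_norm h)\<^sup>2"
    if h: "h \<in> ell2" for h
  proof -
    have fs: "\<And>F. finite F \<Longrightarrow> sum (nsq (c h)) F \<le> (C * ell2_norm h)\<^sup>2"
      using adj_claim1[OF T C0 CT h] unfolding c_def by blast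
    show s: "nsq (c h) summable_on UNIV"
      by (rule nonneg_bdd_above_summable_on) (auto intro!: bdd_aboveI2 fs)
    show "infsum (nsq (c h)) UNIV \<le> (C * ell2_norm h)\<^sup>2"
      by (rule infsum_le_finite_sums[OF s fs])
  qed
  have cl: "c h \<in> ell2" if "h \<in> ell2" for h using csum[OF that] by (simp add: ell2_def)
  have cn: "ell2_norm (c h) \<le> C * ell2_norm h" if h: "h \<in> ell2" for h
  proof -
    have "ell2_norm (c h) = sqrt (infsum (nsq (c h)) UNIV)" by (simp add: ell2_norm_def)
    also have "\<dots> \<le> sqrt ((C * ell2_norm h)\<^sup>2)"
      using cinf[OF h] by (rule real_sqrt_le_mono)
    also have "\<dots> = C * ell2_norm h" using C0 ell2_norm_nonneg[of h] by simp
    finally show ?thesis .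
  qed
  have Tdl: "T (delta y) \<in> ell2" for y by (rule bop_ell2[OF T ell2_delta])
  have bS: "bounded_op S"
    unfolding bounded_op_def
  proof (intro conjI ballI allI impI)
    show "S h \<in> ell2" if "h \<in> ell2" for h using that cl by (simp add: S_def)
    show "S h = (\<lambda>x. 0)" if "h \<notin> ell2" for h using that by (simp add: S_def)
    show "S (\<lambda>x. g x + h x) = (\<lambda>x. S g x + S h x)" if "g \<in> ell2" "h \<in> ell2" for g h
      using that ell2_add[OF that] inner_add_right[OF Tdl that] by (simp add: S_def c_def)
    show "S (\<lambda>x. a * h x) = (\<lambda>x. a * S h x)" if "h \<in> ell2" for a h
      using that ell2_cmult[OF that] by (simp add: S_def c_def inner_cmult_right)
    show "\<exists>C. \<forall>h\<in>ell2. ell2_norm (S h) \<le> C * ell2_norm h"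
      using cn by (auto simp: S_def)
  qed
  have adj: "ell2_inner (T g) h = ell2_inner g (S h)" if g: "g \<in> ell2" and h: "h \<in> ell2" for g h
  proof (rule ccontr)
    define D where "D = ell2_inner (T g) h - ell2_inner g (c h)"
    assume "ell2_inner (T g) h \<noteq> ell2_inner g (S h)"
    then have D0: "cmod D > 0" using h by (simp add: D_def S_def)
    define K where "K = C * ell2_norm h + ell2_norm (c h)"
    have K0: "K \<ge> 0" unfolding K_def using C0 by (simp add: ell2_norm_nonneg)
    define eta where "eta = (cmod D / (2 * (K + 1)))\<^sup>2"
    have eta0: "eta > 0" unfolding eta_def using D0 K0 by simp
    obtain F where F: "finite F" and Fd: "dist (sum (nsq g) F) (infsum (nsq g) UNIV) \<le> eta"
      using infsum_finite_approximation[OF ell2_summable[OF g] eta0] by blast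
    define gF where "gF = (\<lambda>z. if z \<in> F then g z else 0)"
    define r where "r = (\<lambda>z. if z \<in> F then 0 else g z)"
    have gF_eq: "gF = (\<lambda>z. \<Sum>y\<in>F. g y * delta y z)" using delta_sum[OF F] gF_def by simp
    have gFl: "gF \<in> ell2" unfolding gF_eq by (rule ell2_sum[OF F]) simp
    have rl: "r \<in> ell2" by (rule ell2_dom[OF g]) (simp add: r_def)
    have gsplit: "g = (\<lambda>z. gF z + r z)" by (auto simp: gF_def r_def)
    have Tsplit: "T g = (\<lambda>x. T gF x + T r x)"
      using arg_cong[where f=T, OF gsplit] bop_add[OF T gFl rl] by simp
    have i1: "ell2_inner (T g) h = ell2_inner (T gF) h + ell2_inner (T r) h"
      unfolding Tsplit by (rule inner_add_left[OF bop_ell2[OF T gFl] bop_ell2[OF T rl] h])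
    have i2: "ell2_inner g (c h) = ell2_inner gF (c h) + ell2_inner r (c h)"
      using arg_cong[where f="\<lambda>k. ell2_inner k (c h)", OF gsplit] inner_add_left[OF gFl rl cl[OF h]]
      by simp
    have TgF: "T gF = (\<lambda>x. \<Sum>y\<in>F. g y * T (delta y) x)" unfolding gF_eq by (rule bop_sum[OF T F]) simp
    have "ell2_inner (T gF) h = (\<Sum>y\<in>F. cnj (g y) * ell2_inner (T (delta y)) h)"
      unfolding TgF by (rule inner_sum_left[OF F _ h]) (simp add: Tdl)
    also have "\<dots> = (\<Sum>y\<in>F. cnj (g y) * c h y)" by (simp add: c_def)
    also have "\<dots> = ell2_inner gF (c h)"
      unfolding ell2_inner_def
      by (rule sym, rule infsumI, rule has_sum_finite_neutralI[where B=F]) (auto simp: F gF_def)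
    finally have i3: "ell2_inner (T gF) h = ell2_inner gF (c h)" .
    have Deq: "D = ell2_inner (T r) h - ell2_inner r (c h)"
      unfolding D_def i1 i2 i3 by simp
    have "cmod D \<le> cmod (ell2_inner (T r) h) + cmod (ell2_inner r (c h))"
      unfolding Deq by (rule norm_triangle_ineq4)
    also have "\<dots> \<le> ell2_norm (T r) * ell2_norm h + ell2_norm r * ell2_norm (c h)"
      by (intro add_mono cauchy_schwarz bop_ell2[OF T rl] h rl cl)
    also have "\<dots> \<le> (C * ell2_norm r) * ell2_norm h + ell2_norm r * ell2_norm (c h)"
      by (intro add_mono mult_right_mono CT rl ell2_norm_nonneg order_refl)
    also have "\<dots> = K * ell2_norm r" unfolding K_def by (simp add: algebra_simps)
    finally have Dle: "cmod D \<le> K * ell2_norm r" .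
    have sgF: "nsq gF summable_on UNIV" "nsq r summable_on UNIV"
      using gFl rl by (simp_all add: ell2_def)
    have "infsum (nsq g) UNIV = infsum (\<lambda>z. nsq gF z + nsq r z) UNIV"
      by (rule infsum_cong) (simp add: gF_def r_def)
    also have "\<dots> = infsum (nsq gF) UNIV + infsum (nsq r) UNIV" by (rule infsum_add[OF sgF])
    also have "infsum (nsq gF) UNIV = sum (nsq g) F"
      by (rule infsumI, rule has_sum_finite_neutralI[where B=F]) (auto simp: F gF_def)
    finally have "infsum (nsq r) UNIV = infsum (nsq g) UNIV - sum (nsq g) F" by simp
    also have "\<dots> \<le> eta" using Fd by (simp add: dist_real_def)
    finally have "(ell2_norm r)\<^sup>2 \<le> eta" by (simp add: ell2_norm_sq)
    then have "ell2_norm r \<le> sqrt eta" using real_le_rsqrt by blast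
    also have "sqrt eta = cmod D / (2 * (K + 1))" unfolding eta_def using K0 by simp
    finally have rle: "ell2_norm r \<le> cmod D / (2 * (K + 1))" .
    have "cmod D \<le> K * (cmod D / (2 * (K + 1)))"
      using Dle mult_left_mono[OF rle K0] by linarith
    also have "\<dots> < cmod D"
    proof -
      have "K * (cmod D / (2 * (K + 1))) = cmod D * (K / (2 * (K + 1)))" by simp
      also have "\<dots> < cmod D * 1"
        by (rule mult_strict_left_mono[OF _ D0]) (use K0 in simp)
      finally show ?thesis by simp
    qed
    finally show False by simp
  qed
  show ?thesis using bS adj by blast
qed

lemma adj_prop:
  fixes T :: "('a \<Rightarrow> complex) \<Rightarrow> ('a \<Rightarrow> complex)"
  assumes "bounded_op T"
  shows "bounded_op (adj T) \<and> (\<forall>g\<in>ell2. \<forall>h\<in>ell2. ell2_inner (T g) h = ell2_inner g (adj T h))"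
  unfolding adj_def using someI_ex[OF adj_exists[OF assms]] .

lemma adj_unique:
  fixes T :: "('a \<Rightarrow> complex) \<Rightarrow> ('a \<Rightarrow> complex)"
  assumes T: "bounded_op T" and S: "bounded_op S"
    and SA: "\<And>g h. g \<in> ell2 \<Longrightarrow> h \<in> ell2 \<Longrightarrow> ell2_inner (T g) h = ell2_inner g (S h)"
  shows "adj T = S"
proof
  fix h
  show "adj T h = S h"
  proof (cases "h \<in> ell2")
    case True
    show ?thesis
    proof
      fix y
      have "adj T h y = ell2_inner (delta y) (adj T h)" by simp
      also have "\<dots> = ell2_inner (T (delta y)) h" using adj_prop[OF T] True by simp
      also have "\<dots> = ell2_inner (delta y) (S h)" using SA True by simp
      finally show "adj T h y = S h y" by simp
    qed
  next
    case False
    have "bounded_op (adj T)" using adj_prop[OF T] by blast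
    then show ?thesis using bop_out[OF S False] bop_out[OF _ False] by simp
  qed
qed

lemma matrix_rep:
  fixes T :: "('a \<Rightarrow> complex) \<Rightarrow> ('a \<Rightarrow> complex)"
  assumes T: "bounded_op T" and h: "h \<in> ell2"
  shows "T h x = infsum (\<lambda>y. entry T x y * h y) UNIV"
proof -
  let ?A = "adj T"
  have A: "bounded_op ?A" and AA: "\<And>g h. g \<in> ell2 \<Longrightarrow> h \<in> ell2 \<Longrightarrow> ell2_inner (T g) h = ell2_inner g (?A h)"
    using adj_prop[OF T] by auto
  have Ad: "?A (delta x) y = cnj (entry T x y)" for y
  proof -
    have "?A (delta x) y = cnj (T (delta y) x)" using AA[of "delta y" "delta x"] by simp
    then show ?thesis by (simp add: entry_def)
  qed
  have "T h x = ell2_inner (delta x) (T h)" by simp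
  also have "\<dots> = cnj (ell2_inner (T h) (delta x))" by (rule inner_cnj_sym)
  also have "\<dots> = cnj (ell2_inner h (?A (delta x)))" by (subst AA[OF h ell2_delta]) (rule refl)
  also have "\<dots> = infsum (\<lambda>y. cnj (cnj (h y) * ?A (delta x) y)) UNIV"
    unfolding ell2_inner_def by (rule infsum_cnj[symmetric])
  also have "\<dots> = infsum (\<lambda>y. entry T x y * h y) UNIV"
    by (rule infsum_cong) (simp add: Ad mult.commute)
  finally show ?thesis .
qed



lemma ell2_norm_zero_fun[simp]: "ell2_norm (\<lambda>x. 0) = 0"
  by (simp add: ell2_norm_def)

lemma op_norm_le:
  fixes R :: "('a \<Rightarrow> complex) \<Rightarrow> ('a \<Rightarrow> complex)"
  assumes "\<And>h. h \<in> ell2 \<Longrightarrow> ell2_norm (R h) \<le> M * ell2_norm h" "M \<ge> 0"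
  shows "op_norm R \<le> M"
  unfolding op_norm_def
proof (rule cSup_least)
  show "{ell2_norm (R h) |h. h \<in> ell2 \<and> ell2_norm h \<le> 1} \<noteq> {}"
    using ell2_zero by fastforce
  fix z assume "z \<in> {ell2_norm (R h) |h. h \<in> ell2 \<and> ell2_norm h \<le> 1}"
  then obtain h where h: "h \<in> ell2" "ell2_norm h \<le> 1" and z: "z = ell2_norm (R h)" by blast
  have "z \<le> M * ell2_norm h" using assms(1)[OF h(1)] z by simp
  also have "\<dots> \<le> M * 1" by (rule mult_left_mono[OF h(2) assms(2)])
  finally show "z \<le> M" by simp
qed

lemma op_norm_bdd:
  fixes R :: "('a \<Rightarrow> complex) \<Rightarrow> ('a \<Rightarrow> complex)"
  assumes "bounded_op R"
  shows "bdd_above {ell2_norm (R h) |h. h \<in> ell2 \<and> ell2_norm h \<le> 1}"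
proof -
  obtain C where C0: "C \<ge> 0" and CR: "\<And>h. h\<in>ell2 \<Longrightarrow> ell2_norm (R h) \<le> C * ell2_norm h"
    using bop_bound[OF assms] by metis
  show ?thesis
  proof (rule bdd_aboveI)
    fix z assume "z \<in> {ell2_norm (R h) |h. h \<in> ell2 \<and> ell2_norm h \<le> 1}"
    then obtain h where h: "h \<in> ell2" "ell2_norm h \<le> 1" and z: "z = ell2_norm (R h)" by blast
    have "z \<le> C * ell2_norm h" using CR[OF h(1)] z by simp
    also have "\<dots> \<le> C * 1" by (rule mult_left_mono[OF h(2) C0])
    finally show "z \<le> C" by simp
  qed
qed

lemma op_norm_nonneg:
  fixes R :: "('a \<Rightarrow> complex) \<Rightarrow> ('a \<Rightarrow> complex)"
  assumes "bounded_op R"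
  shows "0 \<le> op_norm R"
proof -
  have "ell2_norm (R (\<lambda>x. 0)) \<le> op_norm R"
    unfolding op_norm_def by (rule cSup_upper[OF _ op_norm_bdd[OF assms]]) force
  then show ?thesis using bop_zero[OF assms] by simp
qed

lemma op_norm_ge:
  fixes R :: "('a \<Rightarrow> complex) \<Rightarrow> ('a \<Rightarrow> complex)"
  assumes R: "bounded_op R" and h: "h \<in> ell2"
  shows "ell2_norm (R h) \<le> op_norm R * ell2_norm h"
proof (cases "ell2_norm h = 0")
  case True
  then have "h = (\<lambda>x. 0)" using ell2_norm_zero h by blast
  then show ?thesis using bop_zero[OF R] True by simp
next
  case False
  define n where "n = ell2_norm h"
  have n0: "n > 0" using False ell2_norm_nonneg[of h] unfolding n_def by linarith
  define h' where "h' = (\<lambda>x. complex_of_real (1 / n) * h x)"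
  have h'l: "h' \<in> ell2" unfolding h'_def by (rule ell2_cmult[OF h])
  have h'n: "ell2_norm h' = 1" unfolding h'_def ell2_norm_cmult using n0 by (simp add: n_def norm_divide)
  have "ell2_norm (R h') \<le> op_norm R"
    unfolding op_norm_def by (rule cSup_upper[OF _ op_norm_bdd[OF R]]) (use h'l h'n in force)
  moreover have "ell2_norm (R h') = ell2_norm (R h) / n"
    unfolding h'_def bop_cmult[OF R h] ell2_norm_cmult using n0 by (simp add: norm_divide)
  ultimately have "ell2_norm (R h) / n \<le> op_norm R" by simp
  then show ?thesis using n0 unfolding n_def by (simp add: divide_le_eq)
qed

lemma ell2_norm_add:
  assumes g: "g \<in> ell2" and k: "k \<in> ell2"
  shows "ell2_norm (\<lambda>x. g x + k x) \<le> ell2_norm g + ell2_norm k"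
proof -
  have sg: "nsq g summable_on UNIV" and sk: "nsq k summable_on UNIV"
    using g k by (simp_all add: ell2_def)
  have sgk: "(\<lambda>x. cmod (g x) * cmod (k x)) summable_on UNIV"
    using inner_abs_summable[OF g k] by (simp add: norm_mult)
  have sgk2: "(\<lambda>x. 2 * (cmod (g x) * cmod (k x))) summable_on UNIV"
    by (rule summable_on_cmult_right[OF sgk])
  have s3: "(\<lambda>x. nsq g x + 2 * (cmod (g x) * cmod (k x)) + nsq k x) summable_on UNIV"
    by (intro summable_on_add sg sk sgk2)
  have "infsum (nsq (\<lambda>x. g x + k x)) UNIV
      \<le> infsum (\<lambda>x. nsq g x + 2 * (cmod (g x) * cmod (k x)) + nsq k x) UNIV"
  proof (rule infsum_mono[OF ell2_summable[OF ell2_add[OF g k]] s3])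
    fix x
    have "cmod (g x + k x) \<le> cmod (g x) + cmod (k x)" by (rule norm_triangle_ineq)
    then have "(cmod (g x + k x))\<^sup>2 \<le> (cmod (g x) + cmod (k x))\<^sup>2" by (simp add: power_mono)
    then show "nsq (\<lambda>x. g x + k x) x \<le> nsq g x + 2 * (cmod (g x) * cmod (k x)) + nsq k x"
      by (simp add: power2_sum)
  qed
  also have "\<dots> = infsum (nsq g) UNIV + 2 * infsum (\<lambda>x. cmod (g x) * cmod (k x)) UNIV + infsum (nsq k) UNIV"
    by (simp add: infsum_add sg sk sgk2 summable_on_add infsum_cmult_right')
  also have "\<dots> \<le> (ell2_norm g)\<^sup>2 + 2 * (ell2_norm g * ell2_norm k) + (ell2_norm k)\<^sup>2"
    using cauchy_schwarz_real[OF g k] by (simp add: ell2_norm_sq)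
  also have "\<dots> = (ell2_norm g + ell2_norm k)\<^sup>2" by (simp add: power2_sum)
  finally have "(ell2_norm (\<lambda>x. g x + k x))\<^sup>2 \<le> (ell2_norm g + ell2_norm k)\<^sup>2"
    by (simp add: ell2_norm_sq)
  then show ?thesis
    by (rule power2_le_imp_le) (simp add: ell2_norm_nonneg add_nonneg_nonneg)
qed

lemma ell2_norm_diff:
  assumes g: "g \<in> ell2" and k: "k \<in> ell2"
  shows "ell2_norm (\<lambda>x. g x - k x) \<le> ell2_norm g + ell2_norm k"
  using ell2_norm_add[OF g ell2_cmult[OF k, of "-1"]] ell2_norm_cmult[of "-1" k] by simp

lemma bop_comp:
  fixes A B :: "('a \<Rightarrow> complex) \<Rightarrow> ('a \<Rightarrow> complex)"
  assumes A: "bounded_op A" and B: "bounded_op B"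
  shows "bounded_op (A \<circ> B)"
proof -
  obtain CA where CA0: "CA \<ge> 0" and CA: "\<And>h. h\<in>ell2 \<Longrightarrow> ell2_norm (A h) \<le> CA * ell2_norm h"
    using bop_bound[OF A] by metis
  obtain CB where CB0: "CB \<ge> 0" and CB: "\<And>h. h\<in>ell2 \<Longrightarrow> ell2_norm (B h) \<le> CB * ell2_norm h"
    using bop_bound[OF B] by metis
  show ?thesis
    unfolding bounded_op_def
  proof (intro conjI ballI allI impI)
    show "(A \<circ> B) h \<in> ell2" if "h \<in> ell2" for h using that A B by (simp add: bop_ell2)
    show "(A \<circ> B) h = (\<lambda>x. 0)" if "h \<notin> ell2" for h using that bop_out[OF B] bop_zero[OF A] by simp
    show "(A \<circ> B) (\<lambda>x. g x + h x) = (\<lambda>x. (A \<circ> B) g x + (A \<circ> B) h x)" if "g \<in> ell2" "h \<in> ell2" for g h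
      using that by (simp add: bop_add[OF B] bop_add[OF A] bop_ell2[OF B])
    show "(A \<circ> B) (\<lambda>x. c * h x) = (\<lambda>x. c * (A \<circ> B) h x)" if "h \<in> ell2" for c h
      using that by (simp add: bop_cmult[OF B] bop_cmult[OF A] bop_ell2[OF B])
    show "\<exists>C. \<forall>h\<in>ell2. ell2_norm ((A \<circ> B) h) \<le> C * ell2_norm h"
    proof (intro exI ballI)
      fix h :: "'a \<Rightarrow> complex" assume h: "h \<in> ell2"
      have "ell2_norm ((A \<circ> B) h) \<le> CA * ell2_norm (B h)" using CA bop_ell2[OF B h] by simp
      also have "\<dots> \<le> CA * (CB * ell2_norm h)" by (rule mult_left_mono[OF CB[OF h] CA0])
      finally show "ell2_norm ((A \<circ> B) h) \<le> (CA * CB) * ell2_norm h" by (simp add: mult.assoc)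
    qed
  qed
qed

lemma bop_minus:
  fixes A B :: "('a \<Rightarrow> complex) \<Rightarrow> ('a \<Rightarrow> complex)"
  assumes A: "bounded_op A" and B: "bounded_op B"
  shows "bounded_op (\<lambda>h x. A h x - B h x)"
proof -
  obtain CA where CA0: "CA \<ge> 0" and CA: "\<And>h. h\<in>ell2 \<Longrightarrow> ell2_norm (A h) \<le> CA * ell2_norm h"
    using bop_bound[OF A] by metis
  obtain CB where CB0: "CB \<ge> 0" and CB: "\<And>h. h\<in>ell2 \<Longrightarrow> ell2_norm (B h) \<le> CB * ell2_norm h"
    using bop_bound[OF B] by metis
  show ?thesis
    unfolding bounded_op_def
  proof (intro conjI ballI allI impI)
    show "(\<lambda>x. A h x - B h x) \<in> ell2" if "h \<in> ell2" for h
      using that A B by (simp add: bop_ell2 ell2_diff)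
    show "(\<lambda>x. A h x - B h x) = (\<lambda>x. 0)" if "h \<notin> ell2" for h using that bop_out[OF A] bop_out[OF B] by simp
    show "(\<lambda>x. A (\<lambda>x. g x + h x) x - B (\<lambda>x. g x + h x) x) = (\<lambda>x. (A g x - B g x) + (A h x - B h x))"
      if "g \<in> ell2" "h \<in> ell2" for g h
      using that by (simp add: bop_add[OF B] bop_add[OF A] algebra_simps)
    show "(\<lambda>x. A (\<lambda>x. c * h x) x - B (\<lambda>x. c * h x) x) = (\<lambda>x. c * (A h x - B h x))" if "h \<in> ell2" for c h
      using that by (simp add: bop_cmult[OF B] bop_cmult[OF A] algebra_simps)
    show "\<exists>C. \<forall>h\<in>ell2. ell2_norm (\<lambda>x. A h x - B h x) \<le> C * ell2_norm h"
    proof (intro exI ballI)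
      fix h :: "'a \<Rightarrow> complex" assume h: "h \<in> ell2"
      have "ell2_norm (\<lambda>x. A h x - B h x) \<le> ell2_norm (A h) + ell2_norm (B h)"
        by (rule ell2_norm_diff[OF bop_ell2[OF A h] bop_ell2[OF B h]])
      also have "\<dots> \<le> CA * ell2_norm h + CB * ell2_norm h" by (intro add_mono CA CB h)
      finally show "ell2_norm (\<lambda>x. A h x - B h x) \<le> (CA + CB) * ell2_norm h" by (simp add: algebra_simps)
    qed
  qed
qed



definition wt :: "('a \<Rightarrow> complex) \<Rightarrow> ('a \<Rightarrow> 'a) \<Rightarrow> 'a set \<Rightarrow> (('a \<Rightarrow> complex) \<Rightarrow> ('a \<Rightarrow> complex))" where
  "wt f \<theta> D = (\<lambda>h. if h \<in> ell2 then (\<lambda>x. if x \<in> D then f x * h (\<theta> x) else 0) else (\<lambda>x. 0))"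

lemma wt_norm_aux:
  assumes inj: "inj_on \<theta> D" and fb: "\<And>x. x \<in> D \<Longrightarrow> cmod (f x) \<le> M" and M0: "M \<ge> 0"
    and h: "h \<in> ell2"
  shows "(\<lambda>x. if x \<in> D then f x * h (\<theta> x) else 0) \<in> ell2 \<and>
         ell2_norm (\<lambda>x. if x \<in> D then f x * h (\<theta> x) else 0) \<le> M * ell2_norm h"
proof -
  define k where "k = (\<lambda>x. if x \<in> D then f x * h (\<theta> x) else 0)"
  define q where "q = (\<lambda>x. if x \<in> D then M\<^sup>2 * nsq h (\<theta> x) else 0)"
  have sh: "(\<lambda>y. M\<^sup>2 * nsq h y) summable_on UNIV"
    by (rule summable_on_cmult_right[OF ell2_summable[OF h]])
  then have sh': "(\<lambda>y. M\<^sup>2 * nsq h y) summable_on (\<theta> ` D)"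
    by (rule summable_on_subset) simp
  then have "((\<lambda>y. M\<^sup>2 * nsq h y) \<circ> \<theta>) summable_on D"
    using summable_on_reindex[OF inj] by blast
  then have sqD: "(\<lambda>x. M\<^sup>2 * nsq h (\<theta> x)) summable_on D" by (simp add: o_def)
  have sq: "q summable_on UNIV"
    using sqD by (subst summable_on_cong_neutral[where g=q and T=UNIV, symmetric]) (auto simp: q_def)
  have kq: "nsq k x \<le> q x" for x
  proof (cases "x \<in> D")
    case True
    have "cmod (f x) * cmod (h (\<theta> x)) \<le> M * cmod (h (\<theta> x))"
      by (rule mult_right_mono[OF fb[OF True]]) simp
    then have "(cmod (f x) * cmod (h (\<theta> x)))\<^sup>2 \<le> (M * cmod (h (\<theta> x)))\<^sup>2"
      by (rule power_mono) simp
    then show ?thesis using True by (simp add: k_def q_def norm_mult power_mult_distrib)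
  qed (simp add: k_def q_def)
  have sk: "nsq k summable_on UNIV"
    by (rule summable_on_comparison_test[OF sq]) (auto simp: kq)
  have "infsum (nsq k) UNIV \<le> infsum q UNIV" by (rule infsum_mono[OF sk sq kq])
  also have "infsum q UNIV = infsum (\<lambda>x. M\<^sup>2 * nsq h (\<theta> x)) D"
    by (rule infsum_cong_neutral) (auto simp: q_def)
  also have "\<dots> = infsum (\<lambda>y. M\<^sup>2 * nsq h y) (\<theta> ` D)"
    using infsum_reindex[OF inj, of "\<lambda>y. M\<^sup>2 * nsq h y"] by (simp add: o_def)
  also have "\<dots> \<le> infsum (\<lambda>y. M\<^sup>2 * nsq h y) UNIV"
    by (rule infsum_mono2[OF sh' sh]) auto
  also have "\<dots> = (M * ell2_norm h)\<^sup>2"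
    by (simp add: infsum_cmult_right' ell2_norm_sq power_mult_distrib)
  finally have "(ell2_norm k)\<^sup>2 \<le> (M * ell2_norm h)\<^sup>2" by (simp add: ell2_norm_sq)
  then have "ell2_norm k \<le> M * ell2_norm h"
    by (rule power2_le_imp_le) (simp add: M0 ell2_norm_nonneg)
  moreover have "k \<in> ell2" using sk by (simp add: ell2_def)
  ultimately show ?thesis unfolding k_def by simp
qed

lemma wt_bop:
  assumes inj: "inj_on \<theta> D" and fb: "\<And>x. x \<in> D \<Longrightarrow> cmod (f x) \<le> M" and M0: "M \<ge> 0"
  shows "bounded_op (wt f \<theta> D)"
    and "\<And>h. h \<in> ell2 \<Longrightarrow> ell2_norm (wt f \<theta> D h) \<le> M * ell2_norm h"
    and "op_norm (wt f \<theta> D) \<le> M"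
proof -
  note aux = wt_norm_aux[where f=f and M=M and \<theta>=\<theta> and D=D, OF inj fb M0]
  show nb: "\<And>h. h \<in> ell2 \<Longrightarrow> ell2_norm (wt f \<theta> D h) \<le> M * ell2_norm h"
    using aux by (simp add: wt_def)
  show "bounded_op (wt f \<theta> D)"
    unfolding bounded_op_def
  proof (intro conjI ballI allI impI)
    show "wt f \<theta> D h \<in> ell2" if "h \<in> ell2" for h using that aux by (simp add: wt_def)
    show "wt f \<theta> D h = (\<lambda>x. 0)" if "h \<notin> ell2" for h using that by (simp add: wt_def)
    show "wt f \<theta> D (\<lambda>x. g x + h x) = (\<lambda>x. wt f \<theta> D g x + wt f \<theta> D h x)" if "g \<in> ell2" "h \<in> ell2" for g h
      using that ell2_add[OF that] by (auto simp: wt_def fun_eq_iff algebra_simps)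
    show "wt f \<theta> D (\<lambda>x. c * h x) = (\<lambda>x. c * wt f \<theta> D h x)" if "h \<in> ell2" for c h
      using that ell2_cmult[OF that] by (auto simp: wt_def fun_eq_iff algebra_simps)
    show "\<exists>C. \<forall>h\<in>ell2. ell2_norm (wt f \<theta> D h) \<le> C * ell2_norm h" using nb by blast
  qed
  show "op_norm (wt f \<theta> D) \<le> M" by (rule op_norm_le[OF nb M0])
qed

lemma wt_cong:
  assumes "\<And>x. x \<in> D \<Longrightarrow> f1 x = f2 x" "\<And>x. x \<in> D \<Longrightarrow> \<theta>1 x = \<theta>2 x"
  shows "wt f1 \<theta>1 D = wt f2 \<theta>2 D"
  using assms by (auto simp: wt_def fun_eq_iff)

lemma mult_op_wt: "mult_op f = wt f (\<lambda>x. x) UNIV"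
  by (auto simp: mult_op_def wt_def fun_eq_iff)

lemma wt_id: "wt f (\<lambda>x. x) D = mult_op (\<lambda>x. if x \<in> D then f x else 0)"
  by (auto simp: mult_op_def wt_def fun_eq_iff)

lemma wt_comp:
  assumes inj: "inj_on \<theta>2 D2" and fb: "\<And>x. x \<in> D2 \<Longrightarrow> cmod (f2 x) \<le> M" and M0: "M \<ge> 0"
  shows "wt f1 \<theta>1 D1 \<circ> wt f2 \<theta>2 D2 = wt (\<lambda>x. f1 x * f2 (\<theta>1 x)) (\<lambda>x. \<theta>2 (\<theta>1 x)) {x\<in>D1. \<theta>1 x \<in> D2}"
proof
  fix h
  show "(wt f1 \<theta>1 D1 \<circ> wt f2 \<theta>2 D2) h = wt (\<lambda>x. f1 x * f2 (\<theta>1 x)) (\<lambda>x. \<theta>2 (\<theta>1 x)) {x\<in>D1. \<theta>1 x \<in> D2} h"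
  proof (cases "h \<in> ell2")
    case True
    have "wt f2 \<theta>2 D2 h \<in> ell2" using bop_ell2[OF wt_bop(1)[OF inj fb M0] True] .
    then show ?thesis using True by (auto simp: wt_def fun_eq_iff)
  next
    case False
    then show ?thesis by (auto simp: wt_def fun_eq_iff)
  qed
qed

lemma wt_adj:
  assumes inj: "inj_on \<theta> D" and fb: "\<And>x. x \<in> D \<Longrightarrow> cmod (f x) \<le> M" and M0: "M \<ge> 0"
  shows "adj (wt f \<theta> D) = wt (\<lambda>y. cnj (f (inv_into D \<theta> y))) (inv_into D \<theta>) (\<theta> ` D)"
proof (rule adj_unique[OF wt_bop(1)[OF inj fb M0]])
  let ?i = "inv_into D \<theta>"
  have inj': "inj_on ?i (\<theta> ` D)" by (rule inj_on_inv_into) simp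
  have fb': "cmod (cnj (f (?i y))) \<le> M" if "y \<in> \<theta> ` D" for y
    using fb[OF inv_into_into[OF that]] by simp
  show "bounded_op (wt (\<lambda>y. cnj (f (?i y))) ?i (\<theta> ` D))" by (rule wt_bop(1)[OF inj' fb' M0])
  fix g h :: "'a \<Rightarrow> complex" assume g: "g \<in> ell2" and h: "h \<in> ell2"
  have "ell2_inner (wt f \<theta> D g) h = infsum (\<lambda>x. cnj (f x) * cnj (g (\<theta> x)) * h x) D"
    unfolding ell2_inner_def wt_def using g by (intro infsum_cong_neutral) auto
  also have "\<dots> = infsum ((\<lambda>y. cnj (g y) * (cnj (f (?i y)) * h (?i y))) \<circ> \<theta>) D"
    by (rule infsum_cong) (simp add: inv_into_f_f[OF inj])
  also have "\<dots> = infsum (\<lambda>y. cnj (g y) * (cnj (f (?i y)) * h (?i y))) (\<theta> ` D)"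
    by (rule infsum_reindex[OF inj, symmetric])
  also have "\<dots> = ell2_inner g (wt (\<lambda>y. cnj (f (?i y))) ?i (\<theta> ` D) h)"
    unfolding ell2_inner_def wt_def using h by (intro infsum_cong_neutral) auto
  finally show "ell2_inner (wt f \<theta> D g) h = ell2_inner g (wt (\<lambda>y. cnj (f (?i y))) ?i (\<theta> ` D) h)" .
qed

lemma entry_wt: "entry (wt f \<theta> D) x y = (if x \<in> D \<and> \<theta> x = y then f x else 0)"
proof -
  have "wt f \<theta> D (delta y) = (\<lambda>x. if x \<in> D then f x * delta y (\<theta> x) else 0)"
    by (simp add: wt_def)
  then show ?thesis by (simp add: entry_def delta_def)
qed



lemma chi_wt: "chi A = wt (indicator A) (\<lambda>x. x) UNIV"
  unfolding chi_def mult_op_wt ..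

lemma chi_bop: "bounded_op (chi A)"
  unfolding chi_wt by (rule wt_bop(1)[where M=1]) (auto simp: indicator_def)

lemma chi_apply: "h \<in> ell2 \<Longrightarrow> chi A h = (\<lambda>x. indicator A x * h x)"
  by (simp add: chi_def mult_op_def)

lemma adj_delta:
  fixes T :: "('a \<Rightarrow> complex) \<Rightarrow> ('a \<Rightarrow> complex)"
  assumes T: "bounded_op T"
  shows "adj T (delta x) y = cnj (entry T x y)"
proof -
  have AA: "\<And>g h. g \<in> ell2 \<Longrightarrow> h \<in> ell2 \<Longrightarrow> ell2_inner (T g) h = ell2_inner g (adj T h)"
    using adj_prop[OF T] by auto
  have "adj T (delta x) y = cnj (T (delta y) x)" using AA[of "delta y" "delta x"] by simp
  then show ?thesis by (simp add: entry_def)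
qed

lemma roe_ql:
  fixes T :: "('a::metric_space \<Rightarrow> complex) \<Rightarrow> ('a \<Rightarrow> complex)"
  assumes "T \<in> uniform_roe"
  shows "T \<in> quasi_local"
proof -
  have T: "bounded_op T" and app: "\<And>\<epsilon>. \<epsilon> > 0 \<Longrightarrow> \<exists>S. bounded_op S \<and> finite_propagation S \<and> op_norm (\<lambda>h x. T h x - S h x) \<le> \<epsilon>"
    using assms unfolding uniform_roe_def by auto
  have "\<exists>r>0. \<forall>A B. setdist A B \<ge> r \<longrightarrow> op_norm (chi A \<circ> T \<circ> chi B) \<le> \<epsilon>" if e: "\<epsilon> > 0" for \<epsilon>
  proof -
    obtain S where S: "bounded_op S" and fp: "finite_propagation S"
      and Sn: "op_norm (\<lambda>h x. T h x - S h x) \<le> \<epsilon>" using app[OF e] by blast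
    obtain r0 where r0: "\<And>x y. dist x y > r0 \<Longrightarrow> entry S x y = 0"
      using fp unfolding finite_propagation_def by blast
    define r where "r = max r0 0 + 1"
    have r: "r > 0" "r > r0" unfolding r_def by auto
    have TS: "bounded_op (\<lambda>h x. T h x - S h x)" by (rule bop_minus[OF T S])
    have "op_norm (chi A \<circ> T \<circ> chi B) \<le> \<epsilon>" if AB: "setdist A B \<ge> r" for A B
    proof (rule op_norm_le)
      show "\<epsilon> \<ge> 0" using e by simp
      fix h :: "'a \<Rightarrow> complex" assume h: "h \<in> ell2"
      define k where "k = (\<lambda>x. indicator B x * h x)"
      have kl: "k \<in> ell2" unfolding k_def by (rule ell2_dom[OF h]) (simp add: indicator_def)
      have ck: "chi B h = k" unfolding k_def by (rule chi_apply[OF h])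
      have Tkl: "T k \<in> ell2" by (rule bop_ell2[OF T kl])
      have Skl: "S k \<in> ell2" by (rule bop_ell2[OF S kl])
      have Sk0: "S k x = 0" if x: "x \<in> A" for x
      proof -
        have "S k x = infsum (\<lambda>y. entry S x y * k y) UNIV" by (rule matrix_rep[OF S kl])
        also have "\<dots> = 0"
        proof (rule infsum_0)
          fix y
          show "entry S x y * k y = 0"
          proof (cases "y \<in> B")
            case True
            have "setdist A B \<le> dist x y" by (rule setdist_le_dist[OF x True])
            then have "dist x y > r0" using AB r by linarith
            then show ?thesis using r0 by simp
          qed (simp add: k_def)
        qed
        finally show ?thesis .
      qed
      have eq: "(chi A \<circ> T \<circ> chi B) h = (\<lambda>x. indicator A x * (T k x - S k x))"
        using Sk0 by (auto simp: ck chi_apply[OF Tkl] fun_eq_iff indicator_def)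
      have "ell2_norm ((chi A \<circ> T \<circ> chi B) h) \<le> ell2_norm (\<lambda>x. T k x - S k x)"
        unfolding eq by (rule ell2_norm_mono[OF ell2_diff[OF Tkl Skl]]) (simp add: indicator_def norm_mult)
      also have "\<dots> \<le> op_norm (\<lambda>h x. T h x - S h x) * ell2_norm k"
        using op_norm_ge[OF TS kl] by simp
      also have "\<dots> \<le> \<epsilon> * ell2_norm k"
        by (rule mult_right_mono[OF Sn ell2_norm_nonneg])
      also have "\<dots> \<le> \<epsilon> * ell2_norm h"
        by (rule mult_left_mono) (use e in \<open>auto intro!: ell2_norm_mono[OF h] simp: k_def indicator_def norm_mult\<close>)
      finally show "ell2_norm ((chi A \<circ> T \<circ> chi B) h) \<le> \<epsilon> * ell2_norm h" .
    qed
    then show ?thesis using r by blast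
  qed
  then show ?thesis using T unfolding quasi_local_def by blast
qed



lemma pt_wt: "partial_translation \<theta> D = wt (\<lambda>x. 1) \<theta> D"
  by (auto simp: partial_translation_def wt_def fun_eq_iff)

lemma mult_pt_wt:
  assumes inj: "inj_on \<theta> D"
  shows "mult_op f \<circ> partial_translation \<theta> D = wt f \<theta> D"
proof -
  have "mult_op f \<circ> partial_translation \<theta> D = wt (\<lambda>x. f x * 1) (\<lambda>x. \<theta> x) {x\<in>UNIV. x \<in> D}"
    unfolding pt_wt mult_op_wt by (rule wt_comp[OF inj, where M=1]) auto
  then show ?thesis by simp
qed

lemma bounded_range_iff: "bounded (range (f :: 'a \<Rightarrow> complex)) \<longleftrightarrow> (\<exists>M. \<forall>x. cmod (f x) \<le> M)"
  unfolding bounded_iff by auto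

lemma linf_ops_mult: "bounded (range f) \<Longrightarrow> mult_op f \<in> linf_ops"
  unfolding linf_ops_def by blast

lemma lemmaE:
  fixes T :: "('a::metric_space \<Rightarrow> complex) \<Rightarrow> ('a \<Rightarrow> complex)"
  assumes fb: "bounded (range f)" and bij: "bij_betw \<theta> D R"
    and Kc: "\<forall>\<epsilon>>0. \<exists>K>0. \<forall>x\<in>D. dist x (\<theta> x) > K \<longrightarrow> cmod (f x) < \<epsilon>"
    and Teq: "T = mult_op f \<circ> partial_translation \<theta> D"
  shows "T \<in> normaliser linf_ops uniform_roe"
proof -
  have inj: "inj_on \<theta> D" using bij by (rule bij_betw_imp_inj_on)
  obtain M0 where M0: "\<And>x. cmod (f x) \<le> M0" using fb unfolding bounded_range_iff by blast
  define M where "M = max M0 0"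
  have M: "\<And>x. cmod (f x) \<le> M" "M \<ge> 0" unfolding M_def using M0 by (auto intro: le_max_iff_disj[THEN iffD2])
  have Tw: "T = wt f \<theta> D" unfolding Teq by (rule mult_pt_wt[OF inj])
  have bT: "bounded_op T" unfolding Tw by (rule wt_bop(1)[OF inj M])
  have roe: "T \<in> uniform_roe"
    unfolding uniform_roe_def
  proof (intro CollectI conjI allI impI bT)
    fix \<epsilon> :: real assume e: "\<epsilon> > 0"
    obtain K where K: "K > 0" "\<And>x. x \<in> D \<Longrightarrow> dist x (\<theta> x) > K \<Longrightarrow> cmod (f x) < \<epsilon>"
      using Kc e by blast
    define S where "S = wt (\<lambda>x. if dist x (\<theta> x) \<le> K then f x else 0) \<theta> D"
    have bS: "bounded_op S" unfolding S_def by (rule wt_bop(1)[OF inj _ M(2)]) (auto simp: M)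
    have fpS: "finite_propagation S"
      unfolding finite_propagation_def S_def entry_wt by (intro exI[of _ K]) auto
    have diff: "(\<lambda>h x. T h x - S h x) = wt (\<lambda>x. if dist x (\<theta> x) \<le> K then 0 else f x) \<theta> D"
      unfolding Tw S_def by (auto simp: wt_def fun_eq_iff)
    have "op_norm (\<lambda>h x. T h x - S h x) \<le> \<epsilon>"
      unfolding diff
    proof (rule wt_bop(3)[OF inj])
      fix x assume "x \<in> D"
      then show "cmod (if dist x (\<theta> x) \<le> K then 0 else f x) \<le> \<epsilon>"
        using K(2)[of x] e by (auto simp: not_le intro: less_imp_le)
    qed (use e in simp)
    then show "\<exists>S. bounded_op S \<and> finite_propagation S \<and> op_norm (\<lambda>h x. T h x - S h x) \<le> \<epsilon>"
      using bS fpS by blast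
  qed
  let ?i = "inv_into D \<theta>"
  let ?f' = "\<lambda>y. cnj (f (?i y))"
  have adjT: "adj T = wt ?f' ?i (\<theta> ` D)" unfolding Tw by (rule wt_adj[OF inj M(1) M(2)])
  have inj': "inj_on ?i (\<theta> ` D)" by (rule inj_on_inv_into) simp
  have fb': "cmod (?f' y) \<le> M" for y using M(1) by simp
  have norm_cond: "T \<circ> b \<circ> adj T \<in> linf_ops \<and> adj T \<circ> b \<circ> T \<in> linf_ops" if b: "b \<in> linf_ops" for b
  proof -
    obtain \<beta> where b\<beta>: "b = mult_op \<beta>" and \<beta>b: "bounded (range \<beta>)" using b unfolding linf_ops_def by blast
    obtain Mb0 where Mb0: "\<And>x. cmod (\<beta> x) \<le> Mb0" using \<beta>b unfolding bounded_range_iff by blast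
    define Mb where "Mb = max Mb0 0"
    have Mb: "\<And>x. cmod (\<beta> x) \<le> Mb" "Mb \<ge> 0" unfolding Mb_def using Mb0 by (auto intro: le_max_iff_disj[THEN iffD2])
    have injid: "inj_on (\<lambda>x. x) (UNIV :: 'a set)" by simp
    have c1: "T \<circ> b = wt (\<lambda>x. f x * \<beta> (\<theta> x)) \<theta> D"
      unfolding Tw b\<beta> mult_op_wt by (subst wt_comp[OF injid Mb(1) Mb(2)]) simp
    have c2: "adj T \<circ> b = wt (\<lambda>y. ?f' y * \<beta> (?i y)) ?i (\<theta> ` D)"
      unfolding adjT b\<beta> mult_op_wt by (subst wt_comp[OF injid Mb(1) Mb(2)]) simp
    have fbeta: "cmod (f x * \<beta> (\<theta> x)) \<le> M * Mb" for x
      unfolding norm_mult by (rule mult_mono[OF M(1) Mb(1) M(2)]) simp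
    have fbeta': "cmod (?f' y * \<beta> (?i y)) \<le> M * Mb" for y
      unfolding norm_mult by (rule mult_mono[OF fb' Mb(1) M(2)]) simp
    have MMb: "M * Mb \<ge> 0" using M(2) Mb(2) by simp
    have "T \<circ> b \<circ> adj T = wt (\<lambda>x. f x * \<beta> (\<theta> x) * ?f' (\<theta> x)) (\<lambda>x. ?i (\<theta> x)) {x \<in> D. \<theta> x \<in> \<theta> ` D}"
      unfolding c1 adjT by (rule wt_comp[OF inj' fb' M(2)])
    also have "\<dots> = wt (\<lambda>x. f x * \<beta> (\<theta> x) * cnj (f x)) (\<lambda>x. x) D"
    proof -
      have "{x \<in> D. \<theta> x \<in> \<theta> ` D} = D" by auto
      then show ?thesis by (simp only:) (rule wt_cong, auto simp: inv_into_f_f[OF inj])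
    qed
    also have "\<dots> = mult_op (\<lambda>x. if x \<in> D then f x * \<beta> (\<theta> x) * cnj (f x) else 0)"
      by (rule wt_id)
    finally have e1: "T \<circ> b \<circ> adj T = mult_op (\<lambda>x. if x \<in> D then f x * \<beta> (\<theta> x) * cnj (f x) else 0)" .
    have "bounded (range (\<lambda>x. if x \<in> D then f x * \<beta> (\<theta> x) * cnj (f x) else 0))"
      unfolding bounded_range_iff
    proof (intro exI allI)
      fix x
      have "cmod (f x * \<beta> (\<theta> x) * cnj (f x)) \<le> (M * Mb) * M"
        unfolding norm_mult[of "f x * \<beta> (\<theta> x)"] complex_mod_cnj
        by (rule mult_mono[OF fbeta M(1) MMb]) simp
      then show "cmod (if x \<in> D then f x * \<beta> (\<theta> x) * cnj (f x) else 0) \<le> M * Mb * M"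
        using MMb M(2) by auto
    qed
    then have r1: "T \<circ> b \<circ> adj T \<in> linf_ops" unfolding e1 by (rule linf_ops_mult)
    have "adj T \<circ> b \<circ> T = wt (\<lambda>y. ?f' y * \<beta> (?i y) * f (?i y)) (\<lambda>y. \<theta> (?i y)) {y \<in> \<theta> ` D. ?i y \<in> D}"
      unfolding c2 unfolding Tw by (rule wt_comp[OF inj M(1) M(2)])
    also have "\<dots> = wt (\<lambda>y. ?f' y * \<beta> (?i y) * f (?i y)) (\<lambda>y. y) (\<theta> ` D)"
    proof -
      have "{y \<in> \<theta> ` D. ?i y \<in> D} = \<theta> ` D" by (auto intro: inv_into_into)
      then show ?thesis by (simp only:) (rule wt_cong, auto simp: f_inv_into_f)
    qed
    also have "\<dots> = mult_op (\<lambda>y. if y \<in> \<theta> ` D then ?f' y * \<beta> (?i y) * f (?i y) else 0)"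
      by (rule wt_id)
    finally have e2: "adj T \<circ> b \<circ> T = mult_op (\<lambda>y. if y \<in> \<theta> ` D then ?f' y * \<beta> (?i y) * f (?i y) else 0)" .
    have "bounded (range (\<lambda>y. if y \<in> \<theta> ` D then ?f' y * \<beta> (?i y) * f (?i y) else 0))"
      unfolding bounded_range_iff
    proof (intro exI allI)
      fix y
      have "cmod (?f' y * \<beta> (?i y) * f (?i y)) \<le> (M * Mb) * M"
        unfolding norm_mult[of "?f' y * \<beta> (?i y)"]
        by (rule mult_mono[OF fbeta' M(1) MMb]) simp
      then show "cmod (if y \<in> \<theta> ` D then ?f' y * \<beta> (?i y) * f (?i y) else 0) \<le> M * Mb * M"
        using MMb M(2) by auto
    qed
    then have r2: "adj T \<circ> b \<circ> T \<in> linf_ops" unfolding e2 by (rule linf_ops_mult)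
    show ?thesis using r1 r2 by blast
  qed
  show ?thesis unfolding normaliser_def using roe norm_cond by blast
qed



lemma lemmaD:
  fixes T :: "('a::metric_space \<Rightarrow> complex) \<Rightarrow> ('a \<Rightarrow> complex)"
  assumes T: "bounded_op T" and N: "T \<in> normaliser linf_ops quasi_local"
  shows "\<exists>f \<theta> D R. bounded (range f) \<and> bij_betw \<theta> D R \<and>
             (\<forall>\<epsilon>>0. \<exists>K>0. \<forall>x\<in>D. dist x (\<theta> x) > K \<longrightarrow> cmod (f x) < \<epsilon>) \<and>
             T = mult_op f \<circ> partial_translation \<theta> D"
proof -
  have ql: "T \<in> quasi_local" and NB: "\<And>b. b \<in> linf_ops \<Longrightarrow> T \<circ> b \<circ> adj T \<in> linf_ops \<and> adj T \<circ> b \<circ> T \<in> linf_ops"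
    using N unfolding normaliser_def by auto
  let ?A = "adj T"
  have A: "bounded_op ?A" using adj_prop[OF T] by blast
  have indb: "bounded (range (indicator S :: 'a \<Rightarrow> complex))" for S
    unfolding bounded_range_iff by (intro exI[of _ 1]) (simp add: indicator_def)
  have Tdl: "T (delta y) \<in> ell2" for y by (rule bop_ell2[OF T ell2_delta])
  have Adl: "?A (delta y) \<in> ell2" for y by (rule bop_ell2[OF A ell2_delta])
  have col: "entry T z y = 0" if ne: "entry T x y \<noteq> 0" and zx: "z \<noteq> x" for x y z
  proof -
    obtain g where g: "T \<circ> mult_op (indicator {y}) \<circ> ?A = mult_op g"
      using NB[OF linf_ops_mult[OF indb]] unfolding linf_ops_def by blast
    have "mult_op (indicator {y}) (?A (delta x)) = (\<lambda>w. ?A (delta x) y * delta y w)"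
      using Adl by (auto simp: mult_op_def fun_eq_iff delta_def indicator_def)
    then have "(T \<circ> mult_op (indicator {y}) \<circ> ?A) (delta x) = (\<lambda>w. ?A (delta x) y * T (delta y) w)"
      by (simp add: bop_cmult[OF T ell2_delta])
    then have "(\<lambda>w. ?A (delta x) y * T (delta y) w) = mult_op g (delta x)" by (simp add: g)
    then have eq: "?A (delta x) y * T (delta y) z = g z * delta x z"
      by (auto simp: mult_op_def fun_eq_iff)
    have a0: "?A (delta x) y \<noteq> 0" using ne by (simp add: adj_delta[OF T])
    have dz: "delta x z = 0" using zx by (simp add: delta_def)
    have "?A (delta x) y * T (delta y) z = 0" using eq dz by simp
    then show ?thesis using a0 by (simp add: entry_def)
  qed
  have row: "entry T x z = 0" if ne: "entry T x y \<noteq> 0" and zy: "z \<noteq> y" for x y z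
  proof -
    obtain g where g: "?A \<circ> mult_op (indicator {x}) \<circ> T = mult_op g"
      using NB[OF linf_ops_mult[OF indb]] unfolding linf_ops_def by blast
    have "mult_op (indicator {x}) (T (delta y)) = (\<lambda>w. T (delta y) x * delta x w)"
      using Tdl by (auto simp: mult_op_def fun_eq_iff delta_def indicator_def)
    then have "(?A \<circ> mult_op (indicator {x}) \<circ> T) (delta y) = (\<lambda>w. T (delta y) x * ?A (delta x) w)"
      by (simp add: bop_cmult[OF A ell2_delta])
    then have "(\<lambda>w. T (delta y) x * ?A (delta x) w) = mult_op g (delta y)" by (simp add: g)
    then have eq: "T (delta y) x * ?A (delta x) z = g z * delta y z"
      by (auto simp: mult_op_def fun_eq_iff)
    have a0: "T (delta y) x \<noteq> 0" using ne by (simp add: entry_def)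
    have dz: "delta y z = 0" using zy by (simp add: delta_def)
    have "T (delta y) x * ?A (delta x) z = 0" using eq dz by simp
    then have "?A (delta x) z = 0" using a0 by simp
    then show ?thesis by (simp add: adj_delta[OF T])
  qed
  define D where "D = {x. \<exists>y. entry T x y \<noteq> 0}"
  define \<theta> where "\<theta> x = (SOME y. entry T x y \<noteq> 0)" for x
  define f where "f x = entry T x (\<theta> x)" for x
  have th: "entry T x (\<theta> x) \<noteq> 0" if xD: "x \<in> D" for x
  proof -
    obtain y where "entry T x y \<noteq> 0" using xD unfolding D_def by blast
    then show ?thesis unfolding \<theta>_def by (rule someI)
  qed
  have f0: "f x = 0" if "x \<notin> D" for x using that unfolding D_def f_def by auto
  have inj: "inj_on \<theta> D"
  proof (rule inj_onI)
    fix x1 x2 assume x: "x1 \<in> D" "x2 \<in> D" "\<theta> x1 = \<theta> x2"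
    show "x1 = x2"
    proof (rule ccontr)
      assume "x1 \<noteq> x2"
      then have "entry T x2 (\<theta> x1) = 0" using col[OF th[OF x(1)], of x2] by simp
      then show False using th[OF x(2)] x(3) by simp
    qed
  qed
  obtain C where C0: "C \<ge> 0" and CT: "\<And>h. h\<in>ell2 \<Longrightarrow> ell2_norm (T h) \<le> C * ell2_norm h"
    using bop_bound[OF T] by metis
  have fb: "bounded (range f)"
    unfolding bounded_range_iff
  proof (intro exI allI)
    fix x
    have "cmod (f x) \<le> ell2_norm (T (delta (\<theta> x)))" unfolding f_def entry_def by (rule ell2_point_le[OF Tdl])
    also have "\<dots> \<le> C" using CT[OF ell2_delta] by simp
    finally show "cmod (f x) \<le> C" .
  qed
  have Tw: "T = wt f \<theta> D"
  proof
    fix h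
    show "T h = wt f \<theta> D h"
    proof (cases "h \<in> ell2")
      case False
      then show ?thesis using bop_out[OF T False] by (simp add: wt_def)
    next
      case True
      show ?thesis
      proof
        fix x
        have "T h x = infsum (\<lambda>y. entry T x y * h y) UNIV" by (rule matrix_rep[OF T True])
        also have "\<dots> = (if x \<in> D then f x * h (\<theta> x) else 0)"
        proof (cases "x \<in> D")
          case True
          have "infsum (\<lambda>y. entry T x y * h y) UNIV = (\<Sum>y\<in>{\<theta> x}. entry T x y * h y)"
            by (rule infsumI, rule has_sum_finite_neutralI[where B="{\<theta> x}"]) (use row[OF th[OF True]] in auto)
          then show ?thesis using True by (simp add: f_def)
        next
          case False
          then show ?thesis by (simp add: D_def)
        qed
        finally show "T h x = wt f \<theta> D h x" using True by (simp add: wt_def)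
      qed
    qed
  qed
  have Kc: "\<forall>\<epsilon>>0. \<exists>K>0. \<forall>x\<in>D. dist x (\<theta> x) > K \<longrightarrow> cmod (f x) < \<epsilon>"
  proof (intro allI impI)
    fix \<epsilon> :: real assume e: "\<epsilon> > 0"
    obtain r where r: "r > 0" and rq: "\<And>A B. setdist A B \<ge> r \<Longrightarrow> op_norm (chi A \<circ> T \<circ> chi B) \<le> \<epsilon> / 2"
    proof -
      have e2: "\<epsilon> / 2 > 0" using e by simp
      have "\<forall>\<epsilon>>0. \<exists>r>0. \<forall>A B. setdist A B \<ge> r \<longrightarrow> op_norm (chi A \<circ> T \<circ> chi B) \<le> \<epsilon>"
        using ql unfolding quasi_local_def by blast
      then obtain r where "r > 0" "\<forall>A B. setdist A B \<ge> r \<longrightarrow> op_norm (chi A \<circ> T \<circ> chi B) \<le> \<epsilon> / 2"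
        using e2 by blast
      then show ?thesis using that by blast
    qed
    have "cmod (f x) < \<epsilon>" if x: "x \<in> D" and d: "dist x (\<theta> x) > r" for x
    proof -
      let ?R = "chi {x} \<circ> T \<circ> chi {\<theta> x}"
      have bR: "bounded_op ?R" by (intro bop_comp chi_bop T)
      have "setdist {x} {\<theta> x} \<ge> r" using d by simp
      then have on: "op_norm ?R \<le> \<epsilon> / 2" by (rule rq)
      have cd: "chi {\<theta> x} (delta (\<theta> x)) = delta (\<theta> x)"
        unfolding chi_apply[OF ell2_delta] by (auto simp: fun_eq_iff delta_def indicator_def)
      have "?R (delta (\<theta> x)) x = f x"
        using cd by (simp add: chi_apply[OF Tdl] f_def entry_def)
      then have "cmod (f x) \<le> ell2_norm (?R (delta (\<theta> x)))"
        using ell2_point_le[OF bop_ell2[OF bR ell2_delta]] by metis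
      also have "\<dots> \<le> op_norm ?R * ell2_norm (delta (\<theta> x))" by (rule op_norm_ge[OF bR ell2_delta])
      also have "\<dots> \<le> \<epsilon> / 2" using on by simp
      finally show ?thesis using e by simp
    qed
    then show "\<exists>K>0. \<forall>x\<in>D. dist x (\<theta> x) > K \<longrightarrow> cmod (f x) < \<epsilon>" using r by blast
  qed
  have bij: "bij_betw \<theta> D (\<theta> ` D)" by (rule inj_on_imp_bij_betw[OF inj])
  have "T = mult_op f \<circ> partial_translation \<theta> D" unfolding Tw by (rule mult_pt_wt[OF inj, symmetric])
  then show ?thesis using fb bij Kc by blast
qed

theorem lemma6p2:
  fixes T :: "('a::metric_space \<Rightarrow> complex) \<Rightarrow> ('a \<Rightarrow> complex)"
  assumes "bounded_geometry TYPE('a)"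
    and "bounded_op T"
  shows "(T \<in> normaliser linf_ops uniform_roe \<longleftrightarrow> T \<in> normaliser linf_ops quasi_local)
       \<and> (T \<in> normaliser linf_ops quasi_local \<longleftrightarrow>
          (\<exists>f \<theta> D R. bounded (range f) \<and> bij_betw \<theta> D R \<and>
             (\<forall>\<epsilon>>0. \<exists>K>0. \<forall>x\<in>D. dist x (\<theta> x) > K \<longrightarrow> cmod (f x) < \<epsilon>) \<and>
             T = mult_op f \<circ> partial_translation \<theta> D))"
proof -
  have a: "T \<in> normaliser linf_ops quasi_local" if "T \<in> normaliser linf_ops uniform_roe"
    using that roe_ql unfolding normaliser_def by blast
  have c: "T \<in> normaliser linf_ops uniform_roe" if
    "\<exists>f \<theta> D R. bounded (range f) \<and> bij_betw \<theta> D R \<and>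
             (\<forall>\<epsilon>>0. \<exists>K>0. \<forall>x\<in>D. dist x (\<theta> x) > K \<longrightarrow> cmod (f x) < \<epsilon>) \<and>
             T = mult_op f \<circ> partial_translation \<theta> D"
    using that lemmaE by blast
  show ?thesis using a c lemmaD[OF assms(2)] by blast
qed

end
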